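(* Let $Y$ be a Hilbert space and $r=2$. Let $F$ be Fréchet differentiable and satisfy Assumption (A4) with constants $\rho$ and $K$, and assume $\mathcal M_\rho$ is contained in the interior of $\mathcal D(F)$. Let $y^\delta\in Y$, $\alpha>0$, let $x_\alpha^\delta$ be a minimizer of $\|F(x)-y^\delta\|^2+\alpha\mathcal R(x)$ over $\mathcal D(F)$ and $x_\alpha$ a minimizer of $\|F(x)-y\|^2+\alpha\mathcal R(x)$ over $\mathcal D(F)$, and assume $x^\delta_\alpha,x_\alpha\in\mathcal M_\rho$. Then $\xi_\alpha:=\frac{2}{\alpha}F'(x_\alpha)^*(y-F(x_\alpha))\in\partial\mathcal R(x_\alpha)$ and $$\|F(x^\delta_\alpha)-y^\delta+y-F(x_\alpha)\|^2+2\alpha\Big(1-\frac{4K^2\|F(x_\alpha)-y\|^2}{\alpha}\Big)D_{\xi_\alpha}\mathcal R(x^\delta_\alpha,x_\alpha)\le3\|y^\delta-y\|^2.$$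
   Context: Setting: $X$ is a reflexive Banach space, $Y$ a Hilbert space (identified with its dual, so $F'(x)^*:Y\to X^*$), $F:\mathcal D(F)\subset X\to Y$ weakly closed, $\mathcal R:X\to[0,\infty]$ proper, lower semicontinuous, convex; $F(x)=y$ has a solution in $\mathcal D(\mathcal R)$ and $x^\dagger$ is an $\mathcal R$-minimizing solution (a solution minimizing $\mathcal R$ among all solutions of $F(x)=y$). $\partial\mathcal R$ is the subdifferential and $D_\xi\mathcal R(\bar x,x)=\mathcal R(\bar x)-\mathcal R(x)-\langle\xi,\bar x-x\rangle$ for $\xi\in\partial\mathcal R(x)$. $\mathcal M_\rho:=\{x\in\mathcal D(F):\mathcal R(x)<\rho\}$. Assumption (A4): $F$ is Fréchet differentiable with derivative $F'$, and there exist $\rho>\mathcal R(x^\dagger)$ and $K\ge0$ such that $\|F(\bar x)-F(x)-F'(x)(\bar x-x)\|\le K[D_\xi\mathcal R(\bar x,x)]^{1/2}\|F(\bar x)-F(x)\|$ for all $\bar x,x\in\mathcal M_\rho$ and all $\xi\in\partial\mathcal R(x)$. *)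

theory Defs
  imports "HOL-Analysis.Analysis" "HOL-Library.Extended_Real"
begin

text \<open>Elements of the dual space X* are modelled as bounded linear functionals
  'a \<Rightarrow> real; the dual pairing is function application.\<close>

definition reflexive_space :: "'a::banach itself \<Rightarrow> bool" where
  "reflexive_space _ \<longleftrightarrow>
     (\<forall>\<phi> :: ('a \<Rightarrow>\<^sub>L real) \<Rightarrow>\<^sub>L real. \<exists>x::'a. \<forall>\<xi>. blinfun_apply \<phi> \<xi> = blinfun_apply \<xi> x)"

definition weak_conv_X :: "(nat \<Rightarrow> 'a::real_normed_vector) \<Rightarrow> 'a \<Rightarrow> bool" where
  "weak_conv_X xs x \<longleftrightarrow> (\<forall>\<xi>::'a \<Rightarrow> real. bounded_linear \<xi> \<longrightarrow> (\<lambda>n. \<xi> (xs n)) \<longlonglongrightarrow> \<xi> x)"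

definition weak_conv_Y :: "(nat \<Rightarrow> 'b::real_inner) \<Rightarrow> 'b \<Rightarrow> bool" where
  "weak_conv_Y ys y \<longleftrightarrow> (\<forall>w. (\<lambda>n. inner w (ys n)) \<longlonglongrightarrow> inner w y)"

definition weakly_closed_op :: "('a::real_normed_vector \<Rightarrow> 'b::real_inner) \<Rightarrow> 'a set \<Rightarrow> bool" where
  "weakly_closed_op F D \<longleftrightarrow>
     (\<forall>xs x z. (\<forall>n. xs n \<in> D) \<longrightarrow> weak_conv_X xs x \<longrightarrow> weak_conv_Y (\<lambda>n. F (xs n)) z
        \<longrightarrow> x \<in> D \<and> F x = z)"

definition proper_fun :: "('a \<Rightarrow> ereal) \<Rightarrow> bool" where
  "proper_fun R \<longleftrightarrow> (\<exists>x. R x < \<infinity>) \<and> (\<forall>x. R x > -\<infinity>)"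

definition lsc_fun :: "('a::topological_space \<Rightarrow> ereal) \<Rightarrow> bool" where
  "lsc_fun R \<longleftrightarrow> (\<forall>c. closed {x. R x \<le> c})"

definition convex_fun :: "('a::real_vector \<Rightarrow> ereal) \<Rightarrow> bool" where
  "convex_fun R \<longleftrightarrow> (\<forall>x y t. 0 \<le> t \<and> t \<le> 1 \<longrightarrow>
      R ((1 - t) *\<^sub>R x + t *\<^sub>R y) \<le> ereal (1 - t) * R x + ereal t * R y)"

definition subdiff :: "('a::real_normed_vector \<Rightarrow> ereal) \<Rightarrow> 'a \<Rightarrow> ('a \<Rightarrow> real) set" where
  "subdiff R x = {\<xi>. bounded_linear \<xi> \<and> (\<forall>z. R z \<ge> R x + ereal (\<xi> (z - x)))}"

definition bregman :: "('a::real_vector \<Rightarrow> ereal) \<Rightarrow> ('a \<Rightarrow> real) \<Rightarrow> 'a \<Rightarrow> 'a \<Rightarrow> ereal" where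
  "bregman R \<xi> xb x = R xb - R x - ereal (\<xi> (xb - x))"

definition M_set :: "'a set \<Rightarrow> ('a \<Rightarrow> ereal) \<Rightarrow> real \<Rightarrow> 'a set" where
  "M_set D R \<rho> = {x \<in> D. R x < ereal \<rho>}"

definition R_min_solution :: "('a \<Rightarrow> 'b) \<Rightarrow> 'a set \<Rightarrow> ('a \<Rightarrow> ereal) \<Rightarrow> 'b \<Rightarrow> 'a \<Rightarrow> bool" where
  "R_min_solution F D R y xd \<longleftrightarrow> xd \<in> D \<and> F xd = y \<and> (\<forall>x\<in>D. F x = y \<longrightarrow> R xd \<le> R x)"

definition A4 :: "('a::real_normed_vector \<Rightarrow> 'b::real_normed_vector) \<Rightarrow> ('a \<Rightarrow> 'a \<Rightarrow> 'b) \<Rightarrow> 'a set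
    \<Rightarrow> ('a \<Rightarrow> ereal) \<Rightarrow> 'a \<Rightarrow> real \<Rightarrow> real \<Rightarrow> bool" where
  "A4 F F' D R xd \<rho> K \<longleftrightarrow> ereal \<rho> > R xd \<and> K \<ge> 0 \<and>
     (\<forall>xb\<in>M_set D R \<rho>. \<forall>x\<in>M_set D R \<rho>. \<forall>\<xi>\<in>subdiff R x.
        norm (F xb - F x - F' x (xb - x))
          \<le> K * sqrt (real_of_ereal (bregman R \<xi> xb x)) * norm (F xb - F x))"

definition is_minimizer_on :: "'a set \<Rightarrow> ('a \<Rightarrow> ereal) \<Rightarrow> 'a \<Rightarrow> bool" where
  "is_minimizer_on D J x \<longleftrightarrow> x \<in> D \<and> (\<forall>z\<in>D. J x \<le> J z)"

end

theory Submission imports Defs begin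
lemma subgrad_opt:
  fixes F :: "'a::banach \<Rightarrow> 'b::{real_inner,banach}"
  assumes x0int: "x0 \<in> interior D"
  and der: "(F has_derivative L) (at x0)"
  and R_convex: "convex_fun R"
  and Rx0: "R x0 = ereal r0"
  and alpha: "\<alpha> > 0"
  and minx: "\<forall>z\<in>D. ereal ((norm (F x0 - y))\<^sup>2) + ereal \<alpha> * R x0 \<le> ereal ((norm (F z - y))\<^sup>2) + ereal \<alpha> * R z"
  and Rz: "R z = ereal rz"
  shows "\<alpha> * (r0 - rz) \<le> 2 * inner (F x0 - y) (L (z - x0))"
proof -
  define h where "h = z - x0"
  define g where "g t = (norm (F (x0 + t *\<^sub>R h) - y))\<^sup>2" for t::real
  have lin: "linear L" using der has_derivative_linear by blast
  have d1: "((\<lambda>t. x0 + t *\<^sub>R h) has_derivative (\<lambda>t. t *\<^sub>R h)) (at 0)"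
    by (auto intro!: derivative_eq_intros)
  have der0: "(F has_derivative L) (at (x0 + 0 *\<^sub>R h))" using der by simp
  have d2: "((\<lambda>t. F (x0 + t *\<^sub>R h)) has_derivative (\<lambda>t. L (t *\<^sub>R h))) (at 0)"
    using diff_chain_at[OF d1 der0] by (simp add: o_def)
  have d2': "((\<lambda>t. F (x0 + t *\<^sub>R h) - y) has_derivative (\<lambda>t. L (t *\<^sub>R h))) (at 0)"
    using has_derivative_diff[OF d2 has_derivative_const[of y]] by simp
  define c where "c = 2 * inner (F x0 - y) (L h)"
  have d3: "(g has_derivative (\<lambda>t. c * t)) (at 0)"
  proof -
    have "((\<lambda>t. inner (F (x0 + t *\<^sub>R h) - y) (F (x0 + t *\<^sub>R h) - y)) has_derivative
       (\<lambda>t. inner (F (x0 + 0 *\<^sub>R h) - y) (L (t *\<^sub>R h)) + inner (L (t *\<^sub>R h)) (F (x0 + 0 *\<^sub>R h) - y))) (at 0)"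
      by (rule has_derivative_inner[OF d2' d2'])
    moreover have "\<And>t. inner (F (x0 + 0 *\<^sub>R h) - y) (L (t *\<^sub>R h)) + inner (L (t *\<^sub>R h)) (F (x0 + 0 *\<^sub>R h) - y) = c * t"
      unfolding c_def using linear_scale[OF lin] by (simp add: inner_commute)
    moreover have "g = (\<lambda>t. inner (F (x0 + t *\<^sub>R h) - y) (F (x0 + t *\<^sub>R h) - y))"
      unfolding g_def by (simp add: power2_norm_eq_inner)
    ultimately show ?thesis by simp
  qed
  hence "(g has_field_derivative c) (at 0)"
    unfolding has_field_derivative_def by simp
  hence "(g has_field_derivative c) (at 0 within {0<..})"
    by (rule has_field_derivative_at_within)
  hence lim: "((\<lambda>t. (g t - g 0) / (t - 0)) \<longlongrightarrow> c) (at 0 within {0<..})"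
    by (simp add: has_field_derivative_iff)
  have ev1: "\<forall>\<^sub>F t in at 0 within {0<..}. x0 + t *\<^sub>R h \<in> interior D"
  proof -
    have "((\<lambda>t. x0 + t *\<^sub>R h) \<longlongrightarrow> x0 + 0 *\<^sub>R h) (at 0 within {0<..})"
      by (intro tendsto_intros)
    hence "((\<lambda>t. x0 + t *\<^sub>R h) \<longlongrightarrow> x0) (at 0 within {0<..})" by simp
    thus ?thesis using x0int by (rule topological_tendstoD[OF _ open_interior])
  qed
  have ev2: "\<forall>\<^sub>F t in at (0::real) within {0<..}. t < 1 \<and> 0 < t"
    by (rule eventually_at_rightI[of 0 1]) auto
  have ev: "\<forall>\<^sub>F t in at 0 within {0<..}. \<alpha> * (r0 - rz) \<le> (g t - g 0) / (t - 0)"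
    using ev1 ev2
  proof eventually_elim
    case (elim t)
    hence t: "0 < t" "t < 1" and xt: "x0 + t *\<^sub>R h \<in> D" using interior_subset by auto
    have eq: "x0 + t *\<^sub>R h = (1 - t) *\<^sub>R x0 + t *\<^sub>R z" unfolding h_def
      by (simp add: algebra_simps)
    have cv: "R (x0 + t *\<^sub>R h) \<le> ereal ((1 - t) * r0 + t * rz)"
      using R_convex t unfolding convex_fun_def eq
      by (metis Rx0 Rz less_eq_real_def diff_ge_0_iff_ge plus_ereal.simps(1) times_ereal.simps(1))
    have g0: "g 0 = (norm (F x0 - y))\<^sup>2" unfolding g_def by simp
    have "ereal (g 0) + ereal \<alpha> * ereal r0 \<le> ereal (g t) + ereal \<alpha> * R (x0 + t *\<^sub>R h)"
      using minx xt Rx0 g0 unfolding g_def by auto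
    also have "\<dots> \<le> ereal (g t) + ereal \<alpha> * ereal ((1 - t) * r0 + t * rz)"
      using cv alpha by (intro add_left_mono ereal_mult_left_mono) auto
    finally have "g 0 + \<alpha> * r0 \<le> g t + \<alpha> * ((1 - t) * r0 + t * rz)" by simp
    hence "t * (\<alpha> * (r0 - rz)) \<le> g t - g 0" by (simp add: algebra_simps)
    thus ?case using t by (simp add: pos_le_divide_eq mult.commute)
  qed
  have "\<alpha> * (r0 - rz) \<le> c"
    by (rule tendsto_lowerbound[OF lim ev]) (simp add: trivial_limit_at_right_real)
  thus ?thesis unfolding c_def h_def .
qed
theorem lemma3p5:
  fixes F :: "'a::banach \<Rightarrow> 'b::{real_inner, banach}"
    and F' :: "'a \<Rightarrow> 'a \<Rightarrow> 'b"
    and D :: "'a set" and R :: "'a \<Rightarrow> ereal"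
    and y y\<delta> :: 'b and xdag x\<alpha>\<delta> x\<alpha> :: 'a and \<rho> K \<alpha> :: real
  assumes refl: "reflexive_space TYPE('a)"
    and wclosed: "weakly_closed_op F D"
    and R_nonneg: "\<forall>x. R x \<ge> 0"
    and R_proper: "proper_fun R" and R_lsc: "lsc_fun R" and R_convex: "convex_fun R"
    and sol_exists: "\<exists>x\<in>D. F x = y \<and> R x < \<infinity>"
    and xdag: "R_min_solution F D R y xdag"
    and deriv: "\<forall>x\<in>interior D. (F has_derivative F' x) (at x)"
    and A4: "A4 F F' D R xdag \<rho> K"
    and M_int: "M_set D R \<rho> \<subseteq> interior D"
    and alpha: "\<alpha> > 0"
    and min_delta: "is_minimizer_on D (\<lambda>x. ereal ((norm (F x - y\<delta>))\<^sup>2) + ereal \<alpha> * R x) x\<alpha>\<delta>"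
    and min_exact: "is_minimizer_on D (\<lambda>x. ereal ((norm (F x - y))\<^sup>2) + ereal \<alpha> * R x) x\<alpha>"
    and in_M: "x\<alpha>\<delta> \<in> M_set D R \<rho>" "x\<alpha> \<in> M_set D R \<rho>"
  shows "(\<lambda>h. (2 / \<alpha>) * inner (y - F x\<alpha>) (F' x\<alpha> h)) \<in> subdiff R x\<alpha> \<and>
    ereal ((norm (F x\<alpha>\<delta> - y\<delta> + y - F x\<alpha>))\<^sup>2)
      + ereal (2 * \<alpha> * (1 - 4 * K\<^sup>2 * (norm (F x\<alpha> - y))\<^sup>2 / \<alpha>))
        * bregman R (\<lambda>h. (2 / \<alpha>) * inner (y - F x\<alpha>) (F' x\<alpha> h)) x\<alpha>\<delta> x\<alpha>
    \<le> ereal (3 * (norm (y\<delta> - y))\<^sup>2)"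
  proof -
  obtain r0 where r0: "R x\<alpha> = ereal r0"
    using in_M(2) R_nonneg unfolding M_set_def by (cases "R x\<alpha>") auto
  obtain rd where rd: "R x\<alpha>\<delta> = ereal rd"
    using in_M(1) R_nonneg unfolding M_set_def by (cases "R x\<alpha>\<delta>") auto
  have x0int: "x\<alpha> \<in> interior D" using in_M(2) M_int by auto
  have der: "(F has_derivative F' x\<alpha>) (at x\<alpha>)" using deriv x0int by auto
  have bl: "bounded_linear (F' x\<alpha>)" using der has_derivative_bounded_linear by blast
  define \<xi> where "\<xi> = (\<lambda>h. (2 / \<alpha>) * inner (y - F x\<alpha>) (F' x\<alpha> h))"
  have minx: "\<forall>z\<in>D. ereal ((norm (F x\<alpha> - y))\<^sup>2) + ereal \<alpha> * R x\<alpha> \<le> ereal ((norm (F z - y))\<^sup>2) + ereal \<alpha> * R z"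
    using min_exact unfolding is_minimizer_on_def by auto
  have sub: "\<xi> \<in> subdiff R x\<alpha>"
    unfolding subdiff_def mem_Collect_eq
  proof
    show "bounded_linear \<xi>" unfolding \<xi>_def
      using bounded_linear_const_mult[OF bounded_linear_compose[OF bounded_linear_inner_right bl], of "2/\<alpha>" "y - F x\<alpha>"] by (simp only:)
    show "\<forall>z. R x\<alpha> + ereal (\<xi> (z - x\<alpha>)) \<le> R z"
    proof
      fix z
      show "R x\<alpha> + ereal (\<xi> (z - x\<alpha>)) \<le> R z"
      proof (cases "R z")
        case (real rz)
        have "\<alpha> * (r0 - rz) \<le> 2 * inner (F x\<alpha> - y) (F' x\<alpha> (z - x\<alpha>))"
          by (rule subgrad_opt[OF x0int der R_convex r0 alpha minx real])
        hence "\<alpha> * (r0 + \<xi> (z - x\<alpha>)) \<le> \<alpha> * rz"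
          using alpha unfolding \<xi>_def by (simp add: algebra_simps inner_diff_left)
        hence "r0 + \<xi> (z - x\<alpha>) \<le> rz" using alpha by simp
        thus ?thesis using r0 real by simp
      next
        case PInf thus ?thesis using r0 by simp
      next
        case MInf thus ?thesis using R_nonneg[rule_format, of z] by simp
      qed
    qed
  qed
  define u where "u = F x\<alpha>\<delta> - F x\<alpha>"
  define w where "w = F x\<alpha> - y"
  define d where "d = y - y\<delta>"
  define v where "v = F' x\<alpha> (x\<alpha>\<delta> - x\<alpha>)"
  define Dv where "Dv = rd - r0 - \<xi> (x\<alpha>\<delta> - x\<alpha>)"
  have breg: "bregman R \<xi> x\<alpha>\<delta> x\<alpha> = ereal Dv"
    unfolding bregman_def Dv_def using r0 rd by simp
  have Dv0: "0 \<le> Dv"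
  proof -
    have "R x\<alpha> + ereal (\<xi> (x\<alpha>\<delta> - x\<alpha>)) \<le> R x\<alpha>\<delta>" using sub unfolding subdiff_def by auto
    thus ?thesis using r0 rd unfolding Dv_def by simp
  qed
  have a4: "norm (u - v) \<le> K * sqrt Dv * norm u"
  proof -
    have "\<forall>xb\<in>M_set D R \<rho>. \<forall>x\<in>M_set D R \<rho>. \<forall>\<xi>\<in>subdiff R x.
        norm (F xb - F x - F' x (xb - x)) \<le> K * sqrt (real_of_ereal (bregman R \<xi> xb x)) * norm (F xb - F x)"
      using A4 unfolding A4_def by blast
    hence "norm (F x\<alpha>\<delta> - F x\<alpha> - F' x\<alpha> (x\<alpha>\<delta> - x\<alpha>)) \<le> K * sqrt (real_of_ereal (bregman R \<xi> x\<alpha>\<delta> x\<alpha>)) * norm (F x\<alpha>\<delta> - F x\<alpha>)"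
      using in_M sub by blast
    thus ?thesis unfolding breg u_def v_def by simp
  qed
  have K0: "0 \<le> K" using A4 unfolding A4_def by auto
  have mind: "ereal ((norm (F x\<alpha>\<delta> - y\<delta>))\<^sup>2) + ereal \<alpha> * R x\<alpha>\<delta> \<le> ereal ((norm (F x\<alpha> - y\<delta>))\<^sup>2) + ereal \<alpha> * R x\<alpha>"
    using min_delta min_exact unfolding is_minimizer_on_def by auto
  hence mind': "(norm (u + w + d))\<^sup>2 + \<alpha> * rd \<le> (norm (w + d))\<^sup>2 + \<alpha> * r0"
    using r0 rd unfolding u_def w_def d_def by simp
  have xiv: "\<alpha> * \<xi> (x\<alpha>\<delta> - x\<alpha>) = - 2 * inner w v"
    using alpha unfolding \<xi>_def w_def v_def by (simp add: inner_diff_left)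
  have e1: "(norm (u + w + d))\<^sup>2 = (norm u)\<^sup>2 + (norm w)\<^sup>2 + (norm d)\<^sup>2 + 2 * inner u w + 2 * inner u d + 2 * inner w d"
    by (simp add: power2_norm_eq_inner algebra_simps inner_commute)
  have e2: "(norm (w + d))\<^sup>2 = (norm w)\<^sup>2 + (norm d)\<^sup>2 + 2 * inner w d"
    by (simp add: power2_norm_eq_inner algebra_simps inner_commute)
  have e3: "(norm (u + d))\<^sup>2 = (norm u)\<^sup>2 + (norm d)\<^sup>2 + 2 * inner u d"
    by (simp add: power2_norm_eq_inner algebra_simps inner_commute)
  have step1: "(norm u)\<^sup>2 + 2 * inner u d + \<alpha> * Dv \<le> 2 * inner w (v - u)"
    using mind' e1 e2 xiv unfolding Dv_def by (simp add: inner_diff_right algebra_simps inner_commute[of w u])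
  have cs: "inner w (v - u) \<le> norm w * norm (u - v)"
    using norm_cauchy_schwarz[of w "v - u"] by (simp add: norm_minus_commute)
  have "norm w * norm (u - v) \<le> norm w * (K * sqrt Dv * norm u)"
    using a4 by (simp add: mult_left_mono)
  moreover have "2 * (norm w * (K * sqrt Dv * norm u)) \<le> (norm u)\<^sup>2 / 4 + 4 * K\<^sup>2 * (norm w)\<^sup>2 * Dv"
  proof -
    have gen: "2 * (norm w * (K * S * norm u)) \<le> (norm u)\<^sup>2 / 4 + 4 * K\<^sup>2 * (norm w)\<^sup>2 * (S * S)" for S :: real
    proof -
      have "0 \<le> (norm u / 2 - 2 * (K * norm w * S))\<^sup>2" by simp
      thus ?thesis by (simp add: power2_eq_square algebra_simps)
    qed
    have "sqrt Dv * sqrt Dv = Dv" using Dv0 by simp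
    thus ?thesis using gen[of "sqrt Dv"] by metis
  qed
  ultimately have step2: "(norm u)\<^sup>2 + 2 * inner u d + \<alpha> * Dv \<le> (norm u)\<^sup>2 / 4 + 4 * K\<^sup>2 * (norm w)\<^sup>2 * Dv"
    using step1 cs by linarith
  have par: "(norm u)\<^sup>2 \<le> 2 * (norm (u + d))\<^sup>2 + 2 * (norm d)\<^sup>2"
  proof -
    have "0 \<le> (norm (u + d + d))\<^sup>2" by simp
    moreover have "(norm (u + d + d))\<^sup>2 = (norm u)\<^sup>2 + 4 * (norm d)\<^sup>2 + 4 * inner u d"
      by (simp add: power2_norm_eq_inner algebra_simps inner_commute)
    ultimately show ?thesis using e3 by linarith
  qed
  have fin: "(norm (u + d))\<^sup>2 + 2 * \<alpha> * (1 - 4 * K\<^sup>2 * (norm w)\<^sup>2 / \<alpha>) * Dv \<le> 3 * (norm d)\<^sup>2"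
  proof -
    have "2 * \<alpha> * (1 - 4 * K\<^sup>2 * (norm w)\<^sup>2 / \<alpha>) * Dv = 2 * \<alpha> * Dv - 8 * K\<^sup>2 * (norm w)\<^sup>2 * Dv"
      using alpha by (simp add: field_simps)
    thus ?thesis using step2 par e3 by linarith
  qed
  have nrm: "F x\<alpha>\<delta> - y\<delta> + y - F x\<alpha> = u + d" unfolding u_def d_def by (simp add: algebra_simps)
  have "norm (F x\<alpha> - y) = norm w" unfolding w_def ..
  have "norm (y\<delta> - y) = norm d" unfolding d_def by (simp add: norm_minus_commute)
  show ?thesis
    using sub fin unfolding \<xi>_def[symmetric] breg nrm w_def[symmetric] \<open>norm (y\<delta> - y) = norm d\<close>
    by simp
qed

end
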